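(* Let $X$ be a finite nonempty set and put $p=2|X|-1$. Let $t,k\geq 0$ be integers and let $g\in\mathrm{FG}(X)$ have reduced length $t$. Then the number of elements $(T,g)\in \mathrm{FIM}(X)$ (with this fixed $g$) having exactly $k$ branch edges equals $R_{p,q}(k)$, where $q=2p+(t-1)(p-1)$.
   Context: $\mathrm{FG}(X)$ is the free group on $X$. $\Gamma_X$ is the Cayley graph of $\mathrm{FG}(X)$ with respect to $X$: its vertices are the elements of $\mathrm{FG}(X)$, with an edge from $h$ to $hx$ for each $h$ and each $x\in X$. Elements of the free inverse monoid $\mathrm{FIM}(X)$ are identified (Munn's model) with pairs $(T,g)$, where $T$ is a finite connected subgraph of $\Gamma_X$ containing the vertex $1$ and $g$ is a vertex of $T$. The trunk of $(T,g)$ is the unique geodesic in $T$ from $1$ to $g$. Branch edges are the edges of $T$ not on the trunk. The Fuss–Catalan number is $R_{p,q}(k)=\frac{q}{kp+q}\binom{kp+q}{k}$. *)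

theory Defs
  imports Complex_Main
begin

text \<open>Free group FG(X) on a set X: reduced words over letters (x, b), where
  (x, True) stands for x and (x, False) for x^-1.  The empty word is 1.\<close>

type_synonym 'a fg_word = "('a \<times> bool) list"

fun reduced :: "'a fg_word \<Rightarrow> bool" where
  "reduced [] = True"
| "reduced [l] = True"
| "reduced (l1 # l2 # w) = ((fst l1 \<noteq> fst l2 \<or> snd l1 = snd l2) \<and> reduced (l2 # w))"

definition FG :: "'a set \<Rightarrow> 'a fg_word set" where
  "FG X = {w. set (map fst w) \<subseteq> X \<and> reduced w}"

definition mult_gen :: "'a fg_word \<Rightarrow> 'a \<Rightarrow> 'a fg_word" where
  "mult_gen h x = (if h \<noteq> [] \<and> last h = (x, False) then butlast h else h @ [(x, True)])"

text \<open>Edges of the Cayley graph Gamma_X: the edge (h, x) goes from h to h x.\<close>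
definition cayley_edges :: "'a set \<Rightarrow> ('a fg_word \<times> 'a) set" where
  "cayley_edges X = {(h, x). h \<in> FG X \<and> x \<in> X}"

definition adj :: "('a fg_word \<times> 'a) set \<Rightarrow> 'a fg_word \<Rightarrow> 'a fg_word \<Rightarrow> bool" where
  "adj E u v \<longleftrightarrow> (\<exists>x. (u, x) \<in> E \<and> v = mult_gen u x) \<or> (\<exists>x. (v, x) \<in> E \<and> u = mult_gen v x)"

definition munn_tree :: "'a set \<Rightarrow> 'a fg_word set \<Rightarrow> ('a fg_word \<times> 'a) set \<Rightarrow> bool" where
  "munn_tree X V E \<longleftrightarrow>
     V \<subseteq> FG X \<and> E \<subseteq> cayley_edges X \<and> finite V \<and> finite E \<and> [] \<in> V \<and>
     (\<forall>(h, x) \<in> E. h \<in> V \<and> mult_gen h x \<in> V) \<and>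
     (\<forall>v \<in> V. (([] :: 'a fg_word), v) \<in> {(u, w). adj E u w}\<^sup>*)"

text \<open>Edges of the geodesic in Gamma_X from 1 to a reduced word g (the path through the
  prefixes of g).  Since Gamma_X is a tree, for any Munn tree (T, g) this is the trunk.\<close>
definition trunk_edges :: "'a fg_word \<Rightarrow> ('a fg_word \<times> 'a) set" where
  "trunk_edges g = (\<lambda>i. if snd (g ! i) then (take i g, fst (g ! i))
                        else (take (Suc i) g, fst (g ! i))) ` {..<length g}"

definition fuss_catalan :: "nat \<Rightarrow> nat \<Rightarrow> nat \<Rightarrow> real" where
  "fuss_catalan p q k = real q / real (k * p + q) * real ((k * p + q) choose k)"

end

theory Submission
  imports Defs "HOL-Library.Sublist"
begin


fun fcc :: "nat \<Rightarrow> nat \<Rightarrow> nat \<Rightarrow> nat" where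
  "fcc p q 0 = 1"
| "fcc p 0 (Suc k) = 0"
| "fcc p (Suc q) (Suc k) = fcc p q (Suc k) + fcc p (q + p) k"

lemma fuss_step:
  assumes "p \<ge> 1"
  shows "fuss_catalan p (Suc q) (Suc k) = fuss_catalan p q (Suc k) + fuss_catalan p (q + p) k"
proof -
  define m where "m = k * p + p + q"
  have m0: "m > 0" using assms by (simp add: m_def)
  define B where "B = real (m choose k)"
  have e1: "Suc k * p + Suc q = Suc m" by (simp add: m_def)
  have e2: "Suc k * p + q = m" by (simp add: m_def)
  have e3: "k * p + (q + p) = m" by (simp add: m_def)
  have b1: "real (Suc m choose Suc k) = real (Suc m) / real (Suc k) * B"
  proof -
    have "real (Suc k) * real (Suc m choose Suc k) = real (Suc m) * B"
      unfolding B_def of_nat_mult[symmetric] Suc_times_binomial ..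
    then show ?thesis by (simp add: field_simps)
  qed
  have b2: "real (m choose Suc k) = real (m - k) / real (Suc k) * B"
  proof -
    have sm: "Suc (m - 1) = m" using m0 by simp
    have "(m choose Suc k) * Suc k = m * ((m - 1) choose k)"
      using Suc_times_binomial_eq[of "m - 1" k] unfolding sm by simp
    also have "\<dots> = (m - k) * (m choose k)" using binomial_absorb_comp[of m k] by simp
    finally have "real ((m choose Suc k) * Suc k) = real ((m - k) * (m choose k))" by simp
    then have "real (m choose Suc k) * real (Suc k) = real (m - k) * B"
      unfolding B_def of_nat_mult .
    then show ?thesis by (simp add: field_simps)
  qed
  have "k \<le> k * p" using assms by simp
  then have km: "k \<le> m" unfolding m_def by linarith
  have mk: "real (m - k) = real m - real k" using km by simp
  have mr: "real m = real k * real p + real p + real q" by (simp add: m_def)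
  have num: "real q * (real m - real k) + (real q + real p) * (real k + 1) = (real q + 1) * real m"
    unfolding mr by (simp add: algebra_simps)
  have mpos: "real m > 0" using m0 by simp
  have l: "real (Suc q) / real (Suc m) * (real (Suc m) / real (Suc k) * B) = (real q + 1) / (real k + 1) * B"
    by (simp add: add.commute)
  have r: "real q / real m * ((real m - real k) / real (Suc k) * B) + real (q + p) / real m * B
     = (real q * (real m - real k) + (real q + real p) * (real k + 1)) / (real m * (real k + 1)) * B"
  proof -
    have d: "real m \<noteq> 0" "real k + 1 \<noteq> 0" "real m * (real k + 1) \<noteq> 0" using mpos by auto
    show ?thesis by (simp add: divide_simps d) (simp add: algebra_simps)
  qed
  have "(real q * (real m - real k) + (real q + real p) * (real k + 1)) / (real m * (real k + 1)) * B
     = (real q + 1) / (real k + 1) * B"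
    unfolding num using mpos by (simp add: add.commute)
  then show ?thesis unfolding fuss_catalan_def e1 e2 e3 b1 b2 mk B_def[symmetric] using l r by simp
qed

lemma fcc_fuss:
  assumes "p \<ge> 1" "q \<ge> 1"
  shows "real (fcc p q k) = fuss_catalan p q k"
  using assms(2)
proof (induction k arbitrary: q)
  case 0
  then show ?case by (simp add: fuss_catalan_def)
next
  case (Suc k)
  note IHk = Suc.IH
  show ?case using Suc.prems
  proof (induction q)
    case 0 then show ?case by simp
  next
    case (Suc q)
    have r: "real (fcc p (q + p) k) = fuss_catalan p (q + p) k" using IHk[of "q+p"] assms by simp
    show ?case
    proof (cases "q = 0")
      case True
      then show ?thesis using fuss_step[OF assms(1), of 0 k] r by (simp add: fuss_catalan_def)
    next
      case False
      then show ?thesis using fuss_step[OF assms(1), of q k] r Suc.IH by simp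
    qed
  qed
qed



lemma reduced_snoc:
  "reduced (w @ [l]) \<longleftrightarrow> reduced w \<and> (w = [] \<or> fst (last w) \<noteq> fst l \<or> snd (last w) = snd l)"
  by (induction w rule: reduced.induct) auto

lemma reduced_prefix: "reduced w \<Longrightarrow> prefix u w \<Longrightarrow> reduced u"
  by (induction w rule: rev_induct) (auto simp: reduced_snoc)

lemma FG_prefix: "w \<in> FG X \<Longrightarrow> prefix u w \<Longrightarrow> u \<in> FG X"
proof -
  assume a: "w \<in> FG X" "prefix u w"
  then have "set u \<subseteq> set w" using set_mono_prefix by blast
  then have "fst ` set u \<subseteq> fst ` set w" by (rule image_mono)
  moreover have "fst ` set w \<subseteq> X" "reduced w" using a(1) by (auto simp: FG_def)
  ultimately have "fst ` set u \<subseteq> X" "reduced u" using reduced_prefix a(2) by auto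
  then show ?thesis by (simp add: FG_def)
qed

lemma FG_butlast: "w \<in> FG X \<Longrightarrow> butlast w \<in> FG X"
  using FG_prefix prefixeq_butlast by blast

definition edge :: "'a fg_word \<Rightarrow> 'a fg_word \<times> 'a" where
  "edge w = (if snd (last w) then (butlast w, fst (last w)) else (w, fst (last w)))"

lemma snoc_cases: "w \<noteq> [] \<Longrightarrow> w = butlast w @ [last w]" by simp

lemma edge_mult:
  assumes "w \<in> FG X" "w \<noteq> []"
  shows "mult_gen (fst (edge w)) (snd (edge w)) = (if snd (last w) then w else butlast w)"
proof (cases "snd (last w)")
  case True
  have r: "reduced (butlast w @ [last w])" using assms snoc_cases[of w] by (simp add: FG_def)
  have "\<not> (butlast w \<noteq> [] \<and> last (butlast w) = (fst (last w), False))"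
    using r True unfolding reduced_snoc by auto
  moreover have "last w = (fst (last w), True)" using True by (cases "last w") auto
  ultimately show ?thesis using True assms snoc_cases[of w] by (auto simp: edge_def mult_gen_def)
next
  case False
  then show ?thesis using assms by (simp add: edge_def mult_gen_def prod_eq_iff)
qed

lemma edge_cayley:
  assumes "w \<in> FG X" "w \<noteq> []"
  shows "edge w \<in> cayley_edges X"
proof -
  have "fst (last w) \<in> X" using assms by (auto simp: FG_def)
  then show ?thesis using assms FG_butlast[OF assms(1)] by (simp add: edge_def cayley_edges_def)
qed

lemma cayley_edge:
  assumes "(h, x) \<in> cayley_edges X"
  shows "\<exists>w. w \<in> FG X \<and> w \<noteq> [] \<and> edge w = (h, x) \<and>
     ((h = w \<and> mult_gen h x = butlast w) \<or> (h = butlast w \<and> mult_gen h x = w))"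
proof (cases "h \<noteq> [] \<and> last h = (x, False)")
  case True
  then show ?thesis using assms
    by (intro exI[of _ h]) (auto simp: cayley_edges_def edge_def mult_gen_def)
next
  case False
  have hx: "h \<in> FG X" "x \<in> X" using assms by (auto simp: cayley_edges_def)
  have "h @ [(x, True)] \<in> FG X" using hx False
    by (auto simp: FG_def reduced_snoc prod_eq_iff)
  then show ?thesis using False
    by (intro exI[of _ "h @ [(x, True)]"]) (auto simp: edge_def mult_gen_def)
qed

lemma adj_cases:
  assumes "E \<subseteq> cayley_edges X" "adj E u v"
  shows "\<exists>w. w \<in> FG X \<and> w \<noteq> [] \<and> edge w \<in> E \<and>
     ((u = w \<and> v = butlast w) \<or> (u = butlast w \<and> v = w))"
  using assms(2) unfolding adj_def
proof (elim disjE exE conjE)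
  fix x assume a: "(u, x) \<in> E" "v = mult_gen u x"
  then obtain w where "w \<in> FG X \<and> w \<noteq> [] \<and> edge w = (u, x) \<and>
     ((u = w \<and> mult_gen u x = butlast w) \<or> (u = butlast w \<and> mult_gen u x = w))"
    using cayley_edge[of u x X] assms(1) by blast
  then show ?thesis using a by (intro exI[of _ w]) auto
next
  fix x assume a: "(v, x) \<in> E" "u = mult_gen v x"
  then obtain w where "w \<in> FG X \<and> w \<noteq> [] \<and> edge w = (v, x) \<and>
     ((v = w \<and> mult_gen v x = butlast w) \<or> (v = butlast w \<and> mult_gen v x = w))"
    using cayley_edge[of v x X] assms(1) by blast
  then show ?thesis using a by (intro exI[of _ w]) auto
qed

lemma adj_edge:
  assumes "w \<in> FG X" "w \<noteq> []" "edge w \<in> E"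
  shows "adj E (butlast w) w"
proof (cases "snd (last w)")
  case True
  then have "edge w = (butlast w, fst (last w))" by (simp add: edge_def)
  moreover have "mult_gen (butlast w) (fst (last w)) = w" using edge_mult[OF assms(1,2)] True
    by (simp add: edge_def)
  ultimately show ?thesis using assms(3) unfolding adj_def by metis
next
  case False
  then have "edge w = (w, fst (last w))" by (simp add: edge_def)
  moreover have "mult_gen w (fst (last w)) = butlast w" using edge_mult[OF assms(1,2)] False
    by (simp add: edge_def)
  ultimately show ?thesis using assms(3) unfolding adj_def by metis
qed

lemma edge_ends:
  assumes "w \<in> FG X" "w \<noteq> []"
  shows "{fst (edge w), mult_gen (fst (edge w)) (snd (edge w))} = {w, butlast w}"
  using edge_mult[OF assms] by (auto simp: edge_def)

lemma edge_inj: "inj_on edge (FG X - {[]})"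
proof (rule inj_onI)
  fix v w assume v: "v \<in> FG X - {[]}" and w: "w \<in> FG X - {[]}" and e: "edge v = edge w"
  have "{v, butlast v} = {w, butlast w}" using edge_ends[of v X] edge_ends[of w X] v w e by auto
  moreover have "length (butlast v) < length v" "length (butlast w) < length w" using v w by auto
  ultimately show "v = w" by (metis doubleton_eq_iff less_irrefl less_trans)
qed

definition PC :: "'a set \<Rightarrow> 'a fg_word set \<Rightarrow> bool" where
  "PC X V \<longleftrightarrow> finite V \<and> V \<subseteq> FG X \<and> [] \<in> V \<and> (\<forall>w\<in>V. w \<noteq> [] \<longrightarrow> butlast w \<in> V)"

lemma PC_prefix: "PC X V \<Longrightarrow> v \<in> V \<Longrightarrow> prefix u v \<Longrightarrow> u \<in> V"
proof (induction v rule: rev_induct)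
  case Nil then show ?case by simp
next
  case (snoc l v)
  then have "v \<in> V" unfolding PC_def by (metis butlast_snoc snoc_eq_iff_butlast)
  then show ?case using snoc by auto
qed

lemma munn_iff:
  "munn_tree X V E \<longleftrightarrow> PC X V \<and> E = edge ` (V - {[]})"
proof
  assume m: "munn_tree X V E"
  have Ec: "E \<subseteq> cayley_edges X" and VF: "V \<subseteq> FG X" using m by (auto simp: munn_tree_def)
  have ends: "\<And>h x. (h, x) \<in> E \<Longrightarrow> h \<in> V \<and> mult_gen h x \<in> V" using m by (auto simp: munn_tree_def)
  have reach: "\<And>v. v \<in> V \<Longrightarrow> ([], v) \<in> {(u, w). adj E u w}\<^sup>*" using m by (auto simp: munn_tree_def)
  have inE: "edge w \<in> E" if w: "w \<in> V" "w \<noteq> []" for w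
  proof (rule ccontr)
    assume ne: "edge w \<notin> E"
    have "\<not> prefix w v" if "([], v) \<in> {(u, w). adj E u w}\<^sup>*" for v
      using that
    proof (induction rule: rtrancl_induct)
      case base then show ?case using w by simp
    next
      case (step y z)
      from step(2) have "adj E y z" by simp
      from adj_cases[OF Ec this] obtain w' where w': "w' \<in> FG X" "w' \<noteq> []" "edge w' \<in> E"
        "(y = w' \<and> z = butlast w') \<or> (y = butlast w' \<and> z = w')" by blast
      then show ?case
      proof (elim disjE conjE)
        assume yz: "y = w'" "z = butlast w'"
        show ?thesis
        proof
          assume "prefix w z"
          then have "prefix w (butlast y)" using yz by simp
          from prefix_order.trans[OF this prefixeq_butlast[of y]] show False using step(3) by simp
        qed
      next
        assume yz: "y = butlast w'" "z = w'"
        then have "z = y @ [last w']" using w'(2) by simp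
        show ?thesis
        proof
          assume "prefix w z"
          then have "w = z \<or> prefix w y" using \<open>z = y @ [last w']\<close> prefix_snoc by simp
          then have "w = w'" using step(3) yz by simp
          then show False using w'(3) ne by simp
        qed
      qed
    qed
    from this[OF reach[OF w(1)]] show False by simp
  qed
  have pc: "PC X V"
    unfolding PC_def
  proof (intro conjI ballI impI)
    fix w assume w: "w \<in> V" "w \<noteq> []"
    have "edge w \<in> E" using inE[OF w] .
    then have "fst (edge w) \<in> V \<and> mult_gen (fst (edge w)) (snd (edge w)) \<in> V"
      using ends[of "fst (edge w)" "snd (edge w)"] by simp
    moreover have "{fst (edge w), mult_gen (fst (edge w)) (snd (edge w))} = {w, butlast w}"
      using edge_ends[of w X] VF w by auto
    then have "butlast w = fst (edge w) \<or> butlast w = mult_gen (fst (edge w)) (snd (edge w))"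
      by (metis insert_iff singletonD)
    ultimately show "butlast w \<in> V" by auto
  qed (use m in \<open>auto simp: munn_tree_def\<close>)
  have "E \<subseteq> edge ` (V - {[]})"
  proof
    fix e assume e: "e \<in> E"
    obtain h x where hx: "e = (h, x)" by force
    obtain w where w: "w \<in> FG X" "w \<noteq> []" "edge w = (h, x)"
      "(h = w \<and> mult_gen h x = butlast w) \<or> (h = butlast w \<and> mult_gen h x = w)"
      using cayley_edge[of h x X] Ec e hx by blast
    have "w \<in> V" using w(4) ends[of h x] e hx by auto
    moreover have "e = edge w" using w hx by simp
    ultimately show "e \<in> edge ` (V - {[]})" using w(2) by blast
  qed
  moreover have "edge ` (V - {[]}) \<subseteq> E" using inE by blast
  ultimately show "PC X V \<and> E = edge ` (V - {[]})" using pc by auto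
next
  assume a: "PC X V \<and> E = edge ` (V - {[]})"
  then have pc: "PC X V" and E: "E = edge ` (V - {[]})" by auto
  have VF: "V \<subseteq> FG X" using pc by (simp add: PC_def)
  have r: "v \<in> V \<longrightarrow> ([], v) \<in> {(u, w). adj E u w}\<^sup>*" for v
  proof (induction v rule: rev_induct)
    case Nil then show ?case by simp
  next
    case (snoc l v)
    show ?case
    proof
      assume vl: "v @ [l] \<in> V"
      then have "v \<in> V" using pc unfolding PC_def by (metis butlast_snoc snoc_eq_iff_butlast)
      moreover have "adj E v (v @ [l])"
        using adj_edge[of "v @ [l]" X E] vl VF E by force
      ultimately show "([], v @ [l]) \<in> {(u, w). adj E u w}\<^sup>*"
        using snoc by (meson case_prodI mem_Collect_eq rtrancl.rtrancl_into_rtrancl)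
    qed
  qed
  show "munn_tree X V E"
    unfolding munn_tree_def
  proof (intro conjI)
    show "E \<subseteq> cayley_edges X" using E edge_cayley VF by blast
    show "\<forall>(h, x)\<in>E. h \<in> V \<and> mult_gen h x \<in> V"
    proof (clarify)
      fix h x assume hxE: "(h, x) \<in> E"
      have "(h, x) \<in> edge ` (V - {[]})" using hxE E by simp
      then obtain w where w0: "w \<in> V - {[]}" "(h, x) = edge w" by (rule imageE)
      then have w: "w \<in> V" "w \<noteq> []" "edge w = (h, x)" by auto
      have "butlast w \<in> V" using w pc by (simp add: PC_def)
      moreover have "{h, mult_gen h x} = {w, butlast w}"
        using edge_ends[of w X] w VF by auto
      ultimately show "h \<in> V \<and> mult_gen h x \<in> V" using w(1)
        by (metis insert_iff singletonD)
    qed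
    show "\<forall>v\<in>V. ([], v) \<in> {(u, w). adj E u w}\<^sup>*" using r by blast
  qed (use pc E in \<open>auto simp: PC_def\<close>)
qed



definition forest :: "'a set \<Rightarrow> 'a fg_word set \<Rightarrow> 'a fg_word set \<Rightarrow> bool" where
  "forest X S W \<longleftrightarrow> finite W \<and> W \<subseteq> FG X \<and> (\<forall>w\<in>W. w \<in> S \<or> (w \<noteq> [] \<and> butlast w \<in> W))"

definition indep :: "'a fg_word set \<Rightarrow> bool" where
  "indep S \<longleftrightarrow> (\<forall>s1\<in>S. \<forall>s2\<in>S. prefix s1 s2 \<longrightarrow> s1 = s2)"

definition ch :: "'a set \<Rightarrow> 'a fg_word \<Rightarrow> 'a fg_word set" where
  "ch X u = {w \<in> FG X. w \<noteq> [] \<and> butlast w = u}"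

lemma forest_root: "forest X S W \<Longrightarrow> w \<in> W \<Longrightarrow> \<exists>s\<in>S. prefix s w"
proof (induction w rule: rev_induct)
  case Nil then show ?case unfolding forest_def by auto
next
  case (snoc l v)
  show ?case
  proof (cases "v @ [l] \<in> S")
    case True then show ?thesis by blast
  next
    case False
    then have "v \<in> W" using snoc.prems unfolding forest_def by fastforce
    then obtain s where "s \<in> S" "prefix s v" using snoc by blast
    then show ?thesis by (metis prefix_snoc)
  qed
qed

lemma ch_snoc: "w \<in> ch X u \<Longrightarrow> \<exists>l. w = u @ [l]"
  unfolding ch_def by (metis (mono_tags, lifting) append_butlast_last_id mem_Collect_eq)

lemma ch_image:
  assumes "u \<in> FG X"
  shows "ch X u = (\<lambda>l. u @ [l]) ` {l. fst l \<in> X \<and> (u = [] \<or> fst (last u) \<noteq> fst l \<or> snd (last u) = snd l)}"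
proof -
  have "w \<in> ch X u \<longleftrightarrow> w \<in> (\<lambda>l. u @ [l]) ` {l. fst l \<in> X \<and> (u = [] \<or> fst (last u) \<noteq> fst l \<or> snd (last u) = snd l)}" for w
  proof
    assume w: "w \<in> ch X u"
    obtain l where wl: "w = u @ [l]" using ch_snoc[OF w] by blast
    have "reduced (u @ [l])" "fst ` set (u @ [l]) \<subseteq> X" using w unfolding wl ch_def FG_def by auto
    then have "fst l \<in> X" "u = [] \<or> fst (last u) \<noteq> fst l \<or> snd (last u) = snd l"
      using reduced_snoc[of u l] by auto
    then show "w \<in> (\<lambda>l. u @ [l]) ` {l. fst l \<in> X \<and> (u = [] \<or> fst (last u) \<noteq> fst l \<or> snd (last u) = snd l)}" unfolding wl by blast
  next
    assume "w \<in> (\<lambda>l. u @ [l]) ` {l. fst l \<in> X \<and> (u = [] \<or> fst (last u) \<noteq> fst l \<or> snd (last u) = snd l)}"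
    then obtain l where l: "w = u @ [l]" "fst l \<in> X" "u = [] \<or> fst (last u) \<noteq> fst l \<or> snd (last u) = snd l" by blast
    then show "w \<in> ch X u" using assms unfolding ch_def FG_def by (auto simp: reduced_snoc)
  qed
  then show ?thesis by blast
qed

lemma card_ch:
  assumes "u \<in> FG X" "finite X"
  shows "finite (ch X u) \<and> card (ch X u) = (if u = [] then 2 * card X else 2 * card X - 1)"
proof -
  have inj: "inj (\<lambda>l. u @ [l])" by (auto intro: injI)
  show ?thesis
  proof (cases "u = []")
    case True
    have "{l. fst l \<in> X \<and> (u = [] \<or> fst (last u) \<noteq> fst l \<or> snd (last u) = snd l)} = X \<times> (UNIV :: bool set)"
      using True by auto
    then show ?thesis using True ch_image[OF assms(1)] inj assms(2)
      by (simp add: card_image inj_on_subset card_cartesian_product)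
  next
    case False
    define a where "a = (fst (last u), \<not> snd (last u))"
    have aX: "a \<in> X \<times> (UNIV :: bool set)" using False assms(1) unfolding a_def FG_def by auto
    have "{l. fst l \<in> X \<and> (u = [] \<or> fst (last u) \<noteq> fst l \<or> snd (last u) = snd l)} = X \<times> (UNIV :: bool set) - {a}"
      using False unfolding a_def by auto
    then show ?thesis using False ch_image[OF assms(1)] inj assms(2) aX
      by (simp add: card_image inj_on_subset card_cartesian_product)
  qed
qed

lemma L2:
  assumes "indep S" "s \<in> S" "forest X (S - {s}) W"
  shows "s \<notin> W \<and> forest X S W"
proof
  show "s \<notin> W"
  proof
    assume sW: "s \<in> W"
    then have "s \<noteq> [] \<and> butlast s \<in> W" using assms(3) unfolding forest_def by blast
    then obtain s' where "s' \<in> S - {s}" "prefix s' (butlast s)" using forest_root[OF assms(3)] by blast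
    moreover then have "prefix s' s" using prefixeq_butlast prefix_order.trans by blast
    ultimately show False using assms(1,2) unfolding indep_def by blast
  qed
  show "forest X S W" using assms(3) unfolding forest_def by blast
qed

lemma L3:
  assumes "forest X S W" "s \<in> W"
  shows "forest X (S - {s} \<union> ch X s) (W - {s})"
  unfolding forest_def
proof (intro conjI ballI)
  fix w assume w: "w \<in> W - {s}"
  show "w \<in> S - {s} \<union> ch X s \<or> w \<noteq> [] \<and> butlast w \<in> W - {s}"
    using w assms(1) unfolding forest_def ch_def by auto
qed (use assms in \<open>auto simp: forest_def\<close>)

lemma L4:
  assumes "indep S" "s \<in> S" "S \<subseteq> FG X" "forest X (S - {s} \<union> ch X s) W"
  shows "s \<notin> W \<and> forest X S (insert s W)"
proof
  show "s \<notin> W"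
  proof
    assume "s \<in> W"
    then obtain s' where s': "s' \<in> S - {s} \<union> ch X s" "prefix s' s" using forest_root[OF assms(4)] by blast
    show False
    proof (cases "s' \<in> ch X s")
      case True
      then have "length s' = Suc (length s)" unfolding ch_def by auto
      then show False using s'(2) prefix_length_le by fastforce
    next
      case False
      then show False using s' assms(1,2) unfolding indep_def by blast
    qed
  qed
  show "forest X S (insert s W)"
    using assms unfolding forest_def ch_def by auto
qed

lemma L5:
  assumes "indep S" "s \<in> S"
  shows "indep (S - {s} \<union> ch X s)" "(S - {s}) \<inter> ch X s = {}"
proof -
  show "(S - {s}) \<inter> ch X s = {}"
  proof (rule ccontr)
    assume "(S - {s}) \<inter> ch X s \<noteq> {}"
    then obtain w where w: "w \<in> S" "w \<noteq> s" "w \<in> ch X s" by blast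
    obtain l where "w = s @ [l]" using ch_snoc[OF w(3)] by blast
    then have "prefix s w" by simp
    then show False using w assms unfolding indep_def by blast
  qed
  show "indep (S - {s} \<union> ch X s)"
    unfolding indep_def
  proof (intro ballI impI)
    fix s1 s2 assume s1: "s1 \<in> S - {s} \<union> ch X s" and s2: "s2 \<in> S - {s} \<union> ch X s" and p: "prefix s1 s2"
    show "s1 = s2"
    proof (cases "s1 \<in> ch X s")
      case c1: True
      obtain l1 where l1: "s1 = s @ [l1]" using ch_snoc[OF c1] by blast
      show ?thesis
      proof (cases "s2 \<in> ch X s")
        case True
        obtain l2 where l2: "s2 = s @ [l2]" using ch_snoc[OF True] by blast
        have "length s1 = length s2" unfolding l1 l2 by simp
        then show ?thesis using p unfolding prefix_def by auto
      next
        case False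
        then have "s2 \<in> S" "s2 \<noteq> s" using s2 by auto
        moreover have "prefix s s2" using p unfolding l1 by (metis prefix_snocD prefix_order.less_imp_le)
        ultimately show ?thesis using assms unfolding indep_def by blast
      qed
    next
      case c1: False
      then have s1S: "s1 \<in> S" "s1 \<noteq> s" using s1 by auto
      show ?thesis
      proof (cases "s2 \<in> ch X s")
        case True
        obtain l2 where l2: "s2 = s @ [l2]" using ch_snoc[OF True] by blast
        have "s1 = s2 \<or> prefix s1 s" using p unfolding l2 by simp
        then show ?thesis using s1S assms unfolding indep_def by blast
      next
        case False
        then show ?thesis using s1S s2 p assms unfolding indep_def by blast
      qed
    qed
  qed
qed



lemma forest_count:
  assumes X: "finite X"
  shows "finite S \<Longrightarrow> S \<subseteq> FG X \<Longrightarrow> [] \<notin> S \<Longrightarrow> indep S \<Longrightarrow>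
    finite {W. forest X S W \<and> card W = k} \<and> card {W. forest X S W \<and> card W = k} = fcc (2 * card X - 1) (card S) k"
proof (induction k arbitrary: S)
  case 0
  have "{W. forest X S W \<and> card W = 0} = {{}}" by (auto simp: forest_def)
  then show ?case by simp
next
  case (Suc k)
  note IHk = Suc.IH
  define p where "p = 2 * card X - 1"
  have main: "\<forall>S. card S = n \<longrightarrow> finite S \<longrightarrow> S \<subseteq> FG X \<longrightarrow> [] \<notin> S \<longrightarrow> indep S \<longrightarrow>
    finite {W. forest X S W \<and> card W = Suc k} \<and> card {W. forest X S W \<and> card W = Suc k} = fcc p n (Suc k)" for n
  proof (induction n)
    case 0
    show ?case
    proof (intro allI impI)
      fix S :: "'a fg_word set" assume "card S = 0" "finite S"
      then have S: "S = {}" by simp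
      have emp: "{W. forest X S W \<and> card W = Suc k} = {}"
      proof -
        have "W = {}" if "forest X S W" for W using forest_root[OF that] S by blast
        then show ?thesis by (metis (mono_tags, lifting) card.empty empty_Collect_eq nat.simps(3))
      qed
      then show "finite {W. forest X S W \<and> card W = Suc k} \<and> card {W. forest X S W \<and> card W = Suc k} = fcc p 0 (Suc k)"
        unfolding emp by simp
    qed
  next
    case (Suc n)
    note IHn = Suc.IH
    show ?case
    proof (intro allI impI)
      fix S :: "'a fg_word set"
      assume cS: "card S = Suc n" and fS: "finite S" and SF: "S \<subseteq> FG X" and e: "[] \<notin> S" and ind: "indep S"
      obtain s where s: "s \<in> S" using cS by fastforce
      define S0 where "S0 = S - {s}"
      define S' where "S' = S0 \<union> ch X s"
      have sF: "s \<in> FG X" "s \<noteq> []" using s SF e by auto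
      have cch: "finite (ch X s)" "card (ch X s) = p" using card_ch[OF sF(1) X] sF(2) by (auto simp: p_def)
      have dis: "S0 \<inter> ch X s = {}" using L5(2)[OF ind s] by (simp add: S0_def)
      have cS0: "card S0 = n" using cS s fS by (simp add: S0_def)
      have cS': "card S' = n + p" unfolding S'_def using card_Un_disjoint[OF _ cch(1) dis] fS cS0 cch(2)
        by (simp add: S0_def)
      have fS': "finite S'" using fS cch by (simp add: S'_def S0_def)
      have S'F: "S' \<subseteq> FG X" using SF by (auto simp: S'_def S0_def ch_def)
      have e': "[] \<notin> S'" using e by (auto simp: S'_def S0_def ch_def)
      have ind': "indep S'" using L5(1)[OF ind s] by (simp add: S'_def S0_def)
      have ind0: "indep S0" using ind by (auto simp: indep_def S0_def)
      define A1 where "A1 = {W. forest X S0 W \<and> card W = Suc k}"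
      define B where "B = {W. forest X S' W \<and> card W = k}"
      have h1: "finite A1 \<and> card A1 = fcc p n (Suc k)"
        using IHn cS0 fS SF e ind0 unfolding A1_def S0_def by auto
      have h2: "finite B \<and> card B = fcc p (n + p) k"
        using IHk[OF fS' S'F e' ind'] cS' unfolding B_def p_def by simp
      have split: "{W. forest X S W \<and> card W = Suc k} = A1 \<union> insert s ` B"
      proof (intro set_eqI iffI)
        fix W assume "W \<in> {W. forest X S W \<and> card W = Suc k}"
        then have W: "forest X S W" "card W = Suc k" by auto
        show "W \<in> A1 \<union> insert s ` B"
        proof (cases "s \<in> W")
          case True
          have "forest X S' (W - {s})" using L3[OF W(1) True] by (simp add: S'_def S0_def)
          moreover have "card (W - {s}) = k" using W True by (simp add: forest_def)
          moreover have "W = insert s (W - {s})" using True by auto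
          ultimately show ?thesis unfolding B_def by blast
        next
          case False
          then show ?thesis using W unfolding A1_def S0_def forest_def by auto
        qed
      next
        fix W assume "W \<in> A1 \<union> insert s ` B"
        then show "W \<in> {W. forest X S W \<and> card W = Suc k}"
        proof
          assume "W \<in> A1"
          then show ?thesis using L2[OF ind s] unfolding A1_def S0_def by auto
        next
          assume "W \<in> insert s ` B"
          then obtain W' where W': "W = insert s W'" "forest X S' W'" "card W' = k" unfolding B_def by auto
          have "s \<notin> W' \<and> forest X S (insert s W')" using L4[OF ind s SF] W'(2) by (simp add: S'_def S0_def)
          then show ?thesis using W' by (simp add: forest_def)
        qed
      qed
      have sA1: "\<And>W. W \<in> A1 \<Longrightarrow> s \<notin> W" using L2[OF ind s] unfolding A1_def S0_def by auto
      have sB: "\<And>W. W \<in> B \<Longrightarrow> s \<notin> W" using L4[OF ind s SF] unfolding B_def S'_def S0_def by auto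
      have inj: "inj_on (insert s) B"
        by (rule inj_onI) (metis sB insert_ident)
      have disj: "A1 \<inter> insert s ` B = {}" using sA1 by auto
      have "card (A1 \<union> insert s ` B) = card A1 + card B"
        using card_Un_disjoint[OF _ _ disj] h1 h2 card_image[OF inj] by simp
      then show "finite {W. forest X S W \<and> card W = Suc k} \<and> card {W. forest X S W \<and> card W = Suc k} = fcc p (Suc n) (Suc k)"
        unfolding split using h1 h2 by simp
    qed
  qed
  show ?case using main Suc.prems unfolding p_def by blast
qed



lemma trunk_eq:
  shows "trunk_edges g = edge ` ({u. prefix u g} - {[]})"
proof -
  have P: "{u. prefix u g} - {[]} = (\<lambda>i. take (Suc i) g) ` {..<length g}"
  proof (intro set_eqI iffI)
    fix u assume u: "u \<in> {u. prefix u g} - {[]}"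
    then obtain zs where g: "g = u @ zs" "u \<noteq> []" by (auto simp: prefix_def)
    then obtain n where n: "length u = Suc n" by (cases u) auto
    then have "u = take (Suc (length u - 1)) g" "length u - 1 < length g" using g by auto
    then show "u \<in> (\<lambda>i. take (Suc i) g) ` {..<length g}" by blast
  next
    fix u assume "u \<in> (\<lambda>i. take (Suc i) g) ` {..<length g}"
    then obtain i where i: "i < length g" "u = take (Suc i) g" by blast
    then show "u \<in> {u. prefix u g} - {[]}" using take_is_prefix[of "Suc i" g] by auto
  qed
  have e: "edge (take (Suc i) g) = (if snd (g ! i) then (take i g, fst (g ! i))
                        else (take (Suc i) g, fst (g ! i)))" if "i < length g" for i
    using that by (simp add: edge_def take_Suc_conv_app_nth)
  show ?thesis unfolding trunk_edges_def P image_image using e by simp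
qed

lemma card_edges_diff:
  assumes "P \<subseteq> V" "V \<subseteq> FG X" "[] \<in> P"
  shows "card (edge ` (V - {[]}) - edge ` (P - {[]})) = card (V - P)"
proof -
  have inj: "inj_on edge (FG X - {[]})" by (rule edge_inj)
  have "edge ` (V - {[]}) - edge ` (P - {[]}) = edge ` ((V - {[]}) - (P - {[]}))"
    by (rule inj_on_image_set_diff[OF inj, symmetric]) (use assms in auto)
  also have "(V - {[]}) - (P - {[]}) = V - P" using assms by auto
  finally have eq: "edge ` (V - {[]}) - edge ` (P - {[]}) = edge ` (V - P)" .
  have "V - P \<subseteq> FG X - {[]}" using assms by auto
  then have "inj_on edge (V - P)" using inj_on_subset[OF inj] by blast
  then show ?thesis unfolding eq by (rule card_image)
qed


lemma Sg_props:
  assumes g: "g \<in> FG X" and X: "finite X"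
  defines "P \<equiv> {u. prefix u g}"
  defines "Sg \<equiv> (\<Union>u\<in>P. ch X u) - P"
  shows "finite Sg" "Sg \<subseteq> FG X" "[] \<notin> Sg" "indep Sg"
    "card Sg = 2 * card X + length g * (2 * card X - 1) - length g"
proof -
  have Pset: "P = set (prefixes g)" unfolding P_def by auto
  have fP: "finite P" unfolding Pset by simp
  have cP: "card P = Suc (length g)" unfolding Pset by simp
  have PF: "P \<subseteq> FG X" unfolding P_def using FG_prefix[OF g] by blast
  have eP: "[] \<in> P" unfolding P_def by simp
  define U where "U = (\<Union>u\<in>P. ch X u)"
  have chF: "\<And>u. u \<in> P \<Longrightarrow> finite (ch X u)" using card_ch PF X by blast
  have fU: "finite U" unfolding U_def using fP chF by blast
  show "finite Sg" unfolding Sg_def using fU U_def by simp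
  show "Sg \<subseteq> FG X" unfolding Sg_def ch_def by auto
  show "[] \<notin> Sg" unfolding Sg_def ch_def by auto
  show "indep Sg"
    unfolding indep_def
  proof (intro ballI impI)
    fix s1 s2 assume s1: "s1 \<in> Sg" and s2: "s2 \<in> Sg" and p: "prefix s1 s2"
    obtain u2 where u2: "u2 \<in> P" "s2 \<in> ch X u2" using s2 unfolding Sg_def by blast
    obtain l where l: "s2 = u2 @ [l]" using ch_snoc[OF u2(2)] by blast
    have "s1 = s2 \<or> prefix s1 u2" using p unfolding l by simp
    moreover have "\<not> prefix s1 u2"
    proof
      assume "prefix s1 u2"
      then have "prefix s1 g" using u2(1) unfolding P_def using prefix_order.trans by blast
      then show False using s1 unfolding Sg_def P_def by blast
    qed
    ultimately show "s1 = s2" by blast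
  qed
  have disj: "\<forall>i\<in>P. \<forall>j\<in>P. i \<noteq> j \<longrightarrow> ch X i \<inter> ch X j = {}" unfolding ch_def by auto
  have cU: "card U = (\<Sum>u\<in>P. card (ch X u))" unfolding U_def
    by (rule card_UN_disjoint[OF fP]) (use chF disj in auto)
  also have "\<dots> = card (ch X []) + (\<Sum>u\<in>P - {[]}. card (ch X u))"
    by (rule sum.remove[OF fP eP])
  also have "(\<Sum>u\<in>P - {[]}. card (ch X u)) = (\<Sum>u\<in>P - {[]}. 2 * card X - 1)"
  proof (rule sum.cong)
    fix u assume "u \<in> P - {[]}"
    then show "card (ch X u) = 2 * card X - 1" using card_ch[of u X] PF X by auto
  qed simp
  also have "\<dots> = length g * (2 * card X - 1)" using cP fP eP by simp
  also have "card (ch X []) = 2 * card X" using card_ch[of "[]" X] X by (simp add: FG_def)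
  finally have cU': "card U = 2 * card X + length g * (2 * card X - 1)" .
  have UP: "U \<inter> P = P - {[]}"
  proof (intro set_eqI iffI)
    fix w assume "w \<in> U \<inter> P" then show "w \<in> P - {[]}" unfolding U_def ch_def by auto
  next
    fix w assume w: "w \<in> P - {[]}"
    then have "butlast w \<in> P" unfolding P_def using prefixeq_butlast prefix_order.trans by blast
    moreover have "w \<in> ch X (butlast w)" using w PF unfolding ch_def by auto
    ultimately show "w \<in> U \<inter> P" using w unfolding U_def by blast
  qed
  have "card Sg = card U - card (U \<inter> P)" unfolding Sg_def U_def[symmetric]
    by (rule card_Diff_subset_Int) (use fP in auto)
  also have "card (U \<inter> P) = length g" unfolding UP using cP fP eP by simp
  finally show "card Sg = 2 * card X + length g * (2 * card X - 1) - length g" unfolding cU' .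
qed


lemma forest_bij:
  assumes g: "g \<in> FG X"
  defines "P \<equiv> {u. prefix u g}"
  defines "Sg \<equiv> (\<Union>u\<in>P. ch X u) - P"
  shows "card {V. PC X V \<and> P \<subseteq> V \<and> card (V - P) = k} = card {W. forest X Sg W \<and> card W = k}"
proof -
  have Pset: "P = set (prefixes g)" unfolding P_def by auto
  have fP: "finite P" unfolding Pset by simp
  have PF: "P \<subseteq> FG X" unfolding P_def using FG_prefix[OF g] by blast
  have eP: "[] \<in> P" unfolding P_def by simp
  have Pcl: "butlast u \<in> P" if "u \<in> P" for u
    using that unfolding P_def using prefixeq_butlast prefix_order.trans by blast
  have a: "forest X Sg (V - P)" if V: "PC X V" "P \<subseteq> V" for V
    unfolding forest_def
  proof (intro conjI ballI)
    fix w assume w: "w \<in> V - P"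
    then have wne: "w \<noteq> []" using eP by auto
    have bw: "butlast w \<in> V" using V w wne unfolding PC_def by auto
    show "w \<in> Sg \<or> w \<noteq> [] \<and> butlast w \<in> V - P"
    proof (cases "butlast w \<in> P")
      case True
      have "w \<in> ch X (butlast w)" using w wne V unfolding ch_def PC_def by auto
      then show ?thesis using True w unfolding Sg_def by blast
    next
      case False then show ?thesis using bw wne by blast
    qed
  qed (use V in \<open>auto simp: PC_def\<close>)
  have dj: "W \<inter> P = {}" if W: "forest X Sg W" for W
  proof (rule ccontr)
    assume "W \<inter> P \<noteq> {}"
    then obtain w where w: "w \<in> W" "w \<in> P" by blast
    obtain s where s: "s \<in> Sg" "prefix s w" using forest_root[OF W w(1)] by blast
    then have "s \<in> P" using w(2) unfolding P_def using prefix_order.trans by blast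
    then show False using s unfolding Sg_def by blast
  qed
  have b: "PC X (P \<union> W)" if W: "forest X Sg W" for W
    unfolding PC_def
  proof (intro conjI ballI impI)
    fix w assume w: "w \<in> P \<union> W" "w \<noteq> []"
    show "butlast w \<in> P \<union> W"
    proof (cases "w \<in> P")
      case True then show ?thesis using Pcl by blast
    next
      case False
      then have wW: "w \<in> W" using w by blast
      show ?thesis
      proof (cases "w \<in> Sg")
        case True
        then obtain u where "u \<in> P" "w \<in> ch X u" unfolding Sg_def by blast
        then show ?thesis unfolding ch_def by auto
      next
        case False
        then show ?thesis using W wW unfolding forest_def by blast
      qed
    qed
  qed (use W fP PF eP in \<open>auto simp: forest_def\<close>)
  have "bij_betw (\<lambda>V. V - P) {V. PC X V \<and> P \<subseteq> V \<and> card (V - P) = k} {W. forest X Sg W \<and> card W = k}"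
  proof (rule bij_betw_byWitness[where f' = "\<lambda>W. P \<union> W"])
    show "\<forall>V\<in>{V. PC X V \<and> P \<subseteq> V \<and> card (V - P) = k}. P \<union> (V - P) = V" by auto
    show "\<forall>W\<in>{W. forest X Sg W \<and> card W = k}. (P \<union> W) - P = W" using dj by auto
    show "(\<lambda>V. V - P) ` {V. PC X V \<and> P \<subseteq> V \<and> card (V - P) = k} \<subseteq> {W. forest X Sg W \<and> card W = k}"
      using a by auto
    show "(\<lambda>W. P \<union> W) ` {W. forest X Sg W \<and> card W = k} \<subseteq> {V. PC X V \<and> P \<subseteq> V \<and> card (V - P) = k}"
    proof clarify
      fix W assume W: "forest X Sg W"
      have "(P \<union> W) - P = W" using dj[OF W] by auto
      then show "PC X (P \<union> W) \<and> P \<subseteq> P \<union> W \<and> card (P \<union> W - P) = card W" using b[OF W] by simp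
    qed
  qed
  then show ?thesis by (rule bij_betw_same_card)
qed

lemma munn_set:
  assumes g: "g \<in> FG X"
  defines "P \<equiv> {u. prefix u g}"
  shows "{(V, E). munn_tree X V E \<and> g \<in> V \<and> card (E - trunk_edges g) = k}
     = (\<lambda>V. (V, edge ` (V - {[]}))) ` {V. PC X V \<and> P \<subseteq> V \<and> card (V - P) = k}"
proof -
  have eP: "[] \<in> P" unfolding P_def by simp
  have gP: "g \<in> P" unfolding P_def by simp
  have key: "(g \<in> V \<and> card (edge ` (V - {[]}) - trunk_edges g) = k) \<longleftrightarrow> (P \<subseteq> V \<and> card (V - P) = k)"
    if V: "PC X V" for V
  proof -
    have "g \<in> V \<longleftrightarrow> P \<subseteq> V" using PC_prefix[OF V] gP unfolding P_def by blast
    moreover have "P \<subseteq> V \<Longrightarrow> card (edge ` (V - {[]}) - trunk_edges g) = card (V - P)"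
      unfolding trunk_eq P_def[symmetric] by (rule card_edges_diff) (use V eP in \<open>auto simp: PC_def\<close>)
    ultimately show ?thesis by auto
  qed
  show ?thesis
  proof (intro set_eqI iffI)
    fix x assume "x \<in> {(V, E). munn_tree X V E \<and> g \<in> V \<and> card (E - trunk_edges g) = k}"
    then obtain V E where x: "x = (V, E)" "munn_tree X V E" "g \<in> V" "card (E - trunk_edges g) = k" by blast
    then have "PC X V \<and> E = edge ` (V - {[]})" using munn_iff[of X V E] by simp
    then have "PC X V" "E = edge ` (V - {[]})" by auto
    then show "x \<in> (\<lambda>V. (V, edge ` (V - {[]}))) ` {V. PC X V \<and> P \<subseteq> V \<and> card (V - P) = k}"
      using key x by auto
  next
    fix x assume "x \<in> (\<lambda>V. (V, edge ` (V - {[]}))) ` {V. PC X V \<and> P \<subseteq> V \<and> card (V - P) = k}"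
    then obtain V where V: "x = (V, edge ` (V - {[]}))" "PC X V" "P \<subseteq> V" "card (V - P) = k" by blast
    then have "munn_tree X V (edge ` (V - {[]}))" using munn_iff[of X V "edge ` (V - {[]})"] by simp
    then show "x \<in> {(V, E). munn_tree X V E \<and> g \<in> V \<and> card (E - trunk_edges g) = k}"
      using key[OF V(2)] V by auto
  qed
qed


theorem mainTheorem3:
  fixes X :: "'a set" and g :: "'a fg_word" and t k :: nat
  assumes "finite X" and "X \<noteq> {}"
    and "g \<in> FG X" and "length g = t"
  shows "real (card {(V, E). munn_tree X V E \<and> g \<in> V \<and> card (E - trunk_edges g) = k})
         = fuss_catalan (2 * card X - 1)
             (nat (2 * (2 * int (card X) - 1) + (int t - 1) * ((2 * int (card X) - 1) - 1))) k"
proof -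
  define P where "P = {u. prefix u g}"
  define Sg where "Sg = (\<Union>u\<in>P. ch X u) - P"
  define Vs where "Vs = {V. PC X V \<and> P \<subseteq> V \<and> card (V - P) = k}"
  have S: "finite Sg" "Sg \<subseteq> FG X" "[] \<notin> Sg" "indep Sg"
    "card Sg = 2 * card X + length g * (2 * card X - 1) - length g"
    using Sg_props[OF assms(3,1)] unfolding Sg_def P_def by auto
  have M: "{(V, E). munn_tree X V E \<and> g \<in> V \<and> card (E - trunk_edges g) = k}
     = (\<lambda>V. (V, edge ` (V - {[]}))) ` Vs" using munn_set[OF assms(3)] unfolding Vs_def P_def by simp
  have inj: "inj_on (\<lambda>V. (V, edge ` (V - {[]}))) Vs" by (rule inj_onI) simp
  have c1: "card {(V, E). munn_tree X V E \<and> g \<in> V \<and> card (E - trunk_edges g) = k} = card Vs"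
    unfolding M by (rule card_image[OF inj])
  have c2: "card Vs = card {W. forest X Sg W \<and> card W = k}"
    using forest_bij[OF assms(3)] unfolding Vs_def Sg_def P_def by simp
  have c3: "card {W. forest X Sg W \<and> card W = k} = fcc (2 * card X - 1) (card Sg) k"
    using forest_count[OF assms(1) S(1-4)] by simp
  obtain c where c: "card X = Suc c" using assms(1,2) by (cases "card X") auto
  have cS: "card Sg = 2 * card X + 2 * t * c" using S(5) assms(4) c by simp
  have q: "nat (2 * (2 * int (card X) - 1) + (int t - 1) * ((2 * int (card X) - 1) - 1)) = card Sg"
  proof -
    have "2 * (2 * int (card X) - 1) + (int t - 1) * ((2 * int (card X) - 1) - 1) = int (card Sg)"
      unfolding cS c by (simp add: algebra_simps)
    then show ?thesis by simp
  qed
  have p1: "2 * card X - 1 \<ge> 1" using c by simp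
  have q1: "card Sg \<ge> 1" using cS c by simp
  show ?thesis unfolding c1 c2 c3 q using fcc_fuss[OF p1 q1] by simp
qed

end
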